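(* Let $D=\{(x^i,y^i)\}_{i=1}^n$ be any training sequence and $JJ=\{JJ_{x^i}\}$ substructure sets, and let $R$ be the radius of $D$ and $R^{JJ}$ the mixed assignment radius with respect to $JJ$. Consider the first pass of SWVP over $D$ (in the given order), assuming that at every update the weights returned by $\textsc{SetGamma}$ satisfy the $\gamma$ selection conditions (1) and (2). Then the number of mistakes (updates) made in this first pass satisfies $$\#\text{mistakes-SWVP}\le\min_{\mathbf{u}:\|\mathbf{u}\|=1,\ \delta>0}\frac{(R^{JJ}+D_{\mathbf{u},\delta})^2}{(\delta+r^{diff})^2},$$ where $r^{diff}=r^{diff}(\mathbf{u})\ge 0$. Moreover, for every $\mathbf{u},\delta$ this quantity is at most $\frac{(R+D_{\mathbf{u},\delta})^2}{\delta^2}$.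
   Context: Structured prediction setting: for each input $x$ the output space is $\mathcal{Y}(x)=D_Y^{L_x}$ for a finite domain $D_Y$, with feature map $\phi(x,y')\in\mathbb{R}^d$; $\Delta\phi(x,y,z)=\phi(x,y)-\phi(x,z)$; $[n]=\{1,\dots,n\}$. Mixed assignment: for $y^*,y\in\mathcal{Y}(x)$ and $J\subseteq[L_x]$, $m^J(y^*,y)$ has $k$-th coordinate $y^*_k$ if $k\in J$ and $y_k$ otherwise. Substructure sets $JJ_{x^i}\subseteq 2^{[L_{x^i}]}$ are fixed. SWVP algorithm: initialize $\mathbf{w}=0$; cycle through $(x,y)\in D$; compute $y^*=\arg\max_{y'\in\mathcal{Y}(x)}\mathbf{w}\cdot\phi(x,y')$; if $y^*\neq y$ (a mistake), with $m^J=m^J(y^*,y)$ and $I=\{J\in JJ_x: m^J\ne y\}$, obtain weights $\gamma(m^J)$, $J\in I$, from $\textsc{SetGamma}$ and set $\mathbf{w}\leftarrow\mathbf{w}+\sum_{J\in I}\gamma(m^J)\Delta\phi(x,y,m^J)$. $\gamma$ selection conditions (current $\mathbf{w}$): (1) $\gamma(m^J)\ge0$, $\sum_{J\in I}\gamma(m^J)=1$; (2) $\mathbf{w}\cdot\sum_{J\in I}\gamma(m^J)\Delta\phi(x,y,m^J)\le0$. Radius $R$: minimal constant with $\|\Delta\phi(x^i,y^i,z)\|\le R$ for all $i$, $z\in\mathcal{Y}(x^i)$. Mixed assignment radius $R^{JJ}$: minimal constant with $\|\Delta\phi(x^i,y^i,m^J(z,y^i))\|\le R^{JJ}$ for all $i$,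 $z\in\mathcal{Y}(x^i)$, $J\in JJ_{x^i}$. For a unit vector $\mathbf{u}$ and $\delta>0$: $r^i=\mathbf{u}\cdot\phi(x^i,y^i)-\max_{z\in\mathcal{Y}(x^i),z\ne y^i}\mathbf{u}\cdot\phi(x^i,z)$; $\epsilon_i=\max\{0,\delta-r^i\}$; $D_{\mathbf{u},\delta}=\sqrt{\sum_{i=1}^n\epsilon_i^2}$; ${r^i}^{JJ}=\mathbf{u}\cdot\phi(x^i,y^i)-\max_{z\in\mathcal{Y}(x^i),J\in JJ_{x^i},\,m^J(z,y^i)\ne y^i}\mathbf{u}\cdot\phi(x^i,m^J(z,y^i))$; and $r^{diff}=\min_i\{{r^i}^{JJ}-r^i\}$. *)

theory Defs
  imports "HOL-Analysis.Analysis"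
begin

definition outputs :: "('x \<Rightarrow> nat) \<Rightarrow> 'x \<Rightarrow> ('v::finite) list set" where
  "outputs L x = {ys. length ys = L x}"

text \<open>Mixed assignment m^J(ys, y): coordinate k (1-based) is ys_k if k in J, else y_k.\<close>
definition mixed :: "nat set \<Rightarrow> 'v list \<Rightarrow> 'v list \<Rightarrow> 'v list" where
  "mixed J ys y = map (\<lambda>k. if Suc k \<in> J then ys ! k else y ! k) [0..<length y]"

definition dphi :: "('x \<Rightarrow> 'v list \<Rightarrow> real^'d) \<Rightarrow> 'x \<Rightarrow> 'v list \<Rightarrow> 'v list \<Rightarrow> real^'d" where
  "dphi phi x y z = phi x y - phi x z"

text \<open>One step of SWVP on example (x,y): prediction ystar is an argmax of the current
  weights; on a mistake the weights g (returned by SetGamma) satisfy the gamma selection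
  conditions (1),(2) and the update is performed.\<close>
definition swvp_step ::
  "('x \<Rightarrow> 'v::finite list \<Rightarrow> real^'d) \<Rightarrow> ('x \<Rightarrow> nat) \<Rightarrow> ('x \<Rightarrow> nat set set)
   \<Rightarrow> real^'d \<Rightarrow> 'x \<Rightarrow> 'v list \<Rightarrow> 'v list \<Rightarrow> (nat set \<Rightarrow> real) \<Rightarrow> real^'d \<Rightarrow> bool" where
  "swvp_step phi L JJ w x y ystar g w' \<longleftrightarrow>
     ystar \<in> outputs L x \<and> (\<forall>y'\<in>outputs L x. w \<bullet> phi x y' \<le> w \<bullet> phi x ystar) \<and>
     (if ystar = y then w' = w
      else (let I = {J \<in> JJ x. mixed J ystar y \<noteq> y} in
              (\<forall>J\<in>I. 0 \<le> g J) \<and> (\<Sum>J\<in>I. g J) = 1 \<and>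
              w \<bullet> (\<Sum>J\<in>I. g J *\<^sub>R dphi phi x y (mixed J ystar y)) \<le> 0 \<and>
              w' = w + (\<Sum>J\<in>I. g J *\<^sub>R dphi phi x y (mixed J ystar y))))"

text \<open>A run of the first pass of SWVP over D: w i are the weights before example i
  (0-based), ystar i the prediction on example i, g i the SetGamma weights.\<close>
definition swvp_first_pass ::
  "('x \<Rightarrow> 'v::finite list \<Rightarrow> real^'d) \<Rightarrow> ('x \<Rightarrow> nat) \<Rightarrow> ('x \<Rightarrow> nat set set)
   \<Rightarrow> ('x \<times> 'v list) list \<Rightarrow> (nat \<Rightarrow> real^'d) \<Rightarrow> (nat \<Rightarrow> 'v list) \<Rightarrow> (nat \<Rightarrow> nat set \<Rightarrow> real) \<Rightarrow> bool" where
  "swvp_first_pass phi L JJ D w ystar g \<longleftrightarrow>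
     w 0 = 0 \<and>
     (\<forall>i<length D. swvp_step phi L JJ (w i) (fst (D ! i)) (snd (D ! i)) (ystar i) (g i) (w (Suc i)))"

definition num_mistakes :: "('x \<times> 'v list) list \<Rightarrow> (nat \<Rightarrow> 'v list) \<Rightarrow> nat" where
  "num_mistakes D ystar = card {i. i < length D \<and> ystar i \<noteq> snd (D ! i)}"

text \<open>Radius R and mixed-assignment radius R^JJ (minimal constants = maxima).\<close>
definition radius ::
  "('x \<Rightarrow> 'v::finite list \<Rightarrow> real^'d) \<Rightarrow> ('x \<Rightarrow> nat) \<Rightarrow> ('x \<times> 'v list) list \<Rightarrow> real" where
  "radius phi L D = Max {norm (dphi phi (fst (D ! i)) (snd (D ! i)) z) | i z.
       i < length D \<and> z \<in> outputs L (fst (D ! i))}"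

definition radius_JJ ::
  "('x \<Rightarrow> 'v::finite list \<Rightarrow> real^'d) \<Rightarrow> ('x \<Rightarrow> nat) \<Rightarrow> ('x \<Rightarrow> nat set set) \<Rightarrow> ('x \<times> 'v list) list \<Rightarrow> real" where
  "radius_JJ phi L JJ D = Max {norm (dphi phi (fst (D ! i)) (snd (D ! i)) (mixed J z (snd (D ! i)))) | i z J.
       i < length D \<and> z \<in> outputs L (fst (D ! i)) \<and> J \<in> JJ (fst (D ! i))}"

definition margin ::
  "('x \<Rightarrow> 'v::finite list \<Rightarrow> real^'d) \<Rightarrow> ('x \<Rightarrow> nat) \<Rightarrow> real^'d \<Rightarrow> 'x \<Rightarrow> 'v list \<Rightarrow> real" where
  "margin phi L u x y = u \<bullet> phi x y - Max {u \<bullet> phi x z | z. z \<in> outputs L x \<and> z \<noteq> y}"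

definition margin_JJ ::
  "('x \<Rightarrow> 'v::finite list \<Rightarrow> real^'d) \<Rightarrow> ('x \<Rightarrow> nat) \<Rightarrow> ('x \<Rightarrow> nat set set) \<Rightarrow> real^'d \<Rightarrow> 'x \<Rightarrow> 'v list \<Rightarrow> real" where
  "margin_JJ phi L JJ u x y = u \<bullet> phi x y -
     Max {u \<bullet> phi x (mixed J z y) | z J. z \<in> outputs L x \<and> J \<in> JJ x \<and> mixed J z y \<noteq> y}"

definition r_diff ::
  "('x \<Rightarrow> 'v::finite list \<Rightarrow> real^'d) \<Rightarrow> ('x \<Rightarrow> nat) \<Rightarrow> ('x \<Rightarrow> nat set set) \<Rightarrow> ('x \<times> 'v list) list \<Rightarrow> real^'d \<Rightarrow> real" where
  "r_diff phi L JJ D u = Min {margin_JJ phi L JJ u (fst (D ! i)) (snd (D ! i)) - margin phi L u (fst (D ! i)) (snd (D ! i)) | i.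
       i < length D}"

definition D_u_delta ::
  "('x \<Rightarrow> 'v::finite list \<Rightarrow> real^'d) \<Rightarrow> ('x \<Rightarrow> nat) \<Rightarrow> ('x \<times> 'v list) list \<Rightarrow> real^'d \<Rightarrow> real \<Rightarrow> real" where
  "D_u_delta phi L D u \<delta> = sqrt (\<Sum>i<length D. (max 0 (\<delta> - margin phi L u (fst (D ! i)) (snd (D ! i))))\<^sup>2)"

end

theory Submission
  imports Defs
begin

lemma fin_out: "finite (outputs L x :: ('v::finite) list set)"
  using finite_lists_length_eq[of "UNIV::'v set" "L x"] by (simp add: outputs_def)

lemma len_mixed[simp]: "length (mixed J z y) = length y"
  by (simp add: mixed_def)

lemma fin_img2:
  assumes "finite A" "finite B"
  shows "finite {f z J | z J. z \<in> A \<and> J \<in> B \<and> P z J}"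
  by (rule finite_subset[OF _ finite_imageI[OF finite_cartesian_product[OF assms], of "\<lambda>(z,J). f z J"]]) auto

lemma fin_img1:
  assumes "finite A"
  shows "finite {f z | z. z \<in> A \<and> P z}"
  by (rule finite_subset[OF _ finite_imageI[OF assms, of f]]) auto

theorem theorem2:
  fixes phi :: "'x \<Rightarrow> 'v::finite list \<Rightarrow> real^'d"
    and L :: "'x \<Rightarrow> nat" and JJ :: "'x \<Rightarrow> nat set set"
    and D :: "('x \<times> 'v list) list"
    and w :: "nat \<Rightarrow> real^'d" and ystar :: "nat \<Rightarrow> 'v list" and g :: "nat \<Rightarrow> nat set \<Rightarrow> real"
  assumes D_ne: "D \<noteq> []"
    and labels: "\<forall>i<length D. snd (D ! i) \<in> outputs L (fst (D ! i))"
    and JJ_sub: "\<forall>i<length D. JJ (fst (D ! i)) \<subseteq> Pow {1..L (fst (D ! i))}"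
    and JJ_nontriv: "\<forall>i<length D. \<exists>z J. z \<in> outputs L (fst (D ! i)) \<and> J \<in> JJ (fst (D ! i))
                        \<and> mixed J z (snd (D ! i)) \<noteq> snd (D ! i)"
    and run: "swvp_first_pass phi L JJ D w ystar g"
  shows "\<forall>u \<delta>. norm u = 1 \<and> \<delta> > 0 \<longrightarrow>
           r_diff phi L JJ D u \<ge> 0
         \<and> real (num_mistakes D ystar)
             \<le> (radius_JJ phi L JJ D + D_u_delta phi L D u \<delta>)\<^sup>2 / (\<delta> + r_diff phi L JJ D u)\<^sup>2
         \<and> (radius_JJ phi L JJ D + D_u_delta phi L D u \<delta>)\<^sup>2 / (\<delta> + r_diff phi L JJ D u)\<^sup>2
             \<le> (radius phi L D + D_u_delta phi L D u \<delta>)\<^sup>2 / \<delta>\<^sup>2"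
proof (intro allI impI)
  fix u :: "real^'d" and \<delta> :: real
  assume h: "norm u = 1 \<and> \<delta> > 0"
  hence nu: "norm u = 1" and dpos: "\<delta> > 0" by auto
  define n where "n = length D"
  define X where "X i = fst (D ! i)" for i
  define Y where "Y i = snd (D ! i)" for i
  define mg where "mg i = margin phi L u (X i) (Y i)" for i
  define mgJ where "mgJ i = margin_JJ phi L JJ u (X i) (Y i)" for i
  define rd where "rd = r_diff phi L JJ D u"
  define eps where "eps i = max 0 (\<delta> - mg i)" for i
  define RJ where "RJ = radius_JJ phi L JJ D"
  define R where "R = radius phi L D"
  define Dd where "Dd = D_u_delta phi L D u \<delta>"
  have finJJ: "finite (JJ (X i))" if "i < n" for i
    using JJ_sub that unfolding n_def X_def by (meson finite_Pow_iff finite_atLeastAtMost finite_subset)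
  have lenY: "length (Y i) = L (X i)" if "i < n" for i
    using labels that unfolding n_def X_def Y_def by (simp add: outputs_def)
  have mgJ_ge: "mg i \<le> mgJ i" if i: "i < n" for i
  proof -
    let ?A = "{u \<bullet> phi (X i) (mixed J z (Y i)) | z J. z \<in> outputs L (X i) \<and> J \<in> JJ (X i) \<and> mixed J z (Y i) \<noteq> Y i}"
    let ?B = "{u \<bullet> phi (X i) z | z. z \<in> outputs L (X i) \<and> z \<noteq> Y i}"
    have "?A \<subseteq> ?B" using lenY[OF i] by (auto simp: outputs_def)
    moreover have "?A \<noteq> {}" using JJ_nontriv i unfolding n_def X_def Y_def by blast
    moreover have "finite ?B" by (rule fin_img1[OF fin_out])
    ultimately have "Max ?A \<le> Max ?B" by (rule Max_mono)
    thus ?thesis unfolding mg_def mgJ_def margin_def margin_JJ_def by simp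
  qed
  let ?S = "{margin_JJ phi L JJ u (fst (D ! i)) (snd (D ! i)) - margin phi L u (fst (D ! i)) (snd (D ! i)) | i. i < length D}"
  have finS: "finite ?S" using fin_img1[of "{..<length D}"] by simp
  have rd_le: "rd \<le> mgJ i - mg i" if "i < n" for i
    unfolding rd_def r_diff_def mgJ_def mg_def X_def Y_def
    by (rule Min_le[OF finS]) (use that n_def in auto)
  have rd_nn: "rd \<ge> 0"
  proof -
    have "?S \<noteq> {}" using D_ne by auto
    hence "rd \<in> ?S" unfolding rd_def r_diff_def using Min_in[OF finS] by blast
    then obtain i where "i < n" "rd = mgJ i - mg i"
      unfolding mgJ_def mg_def X_def Y_def n_def by auto
    thus ?thesis using mgJ_ge by fastforce
  qed
  have udphi: "mgJ i \<le> u \<bullet> dphi phi (X i) (Y i) (mixed J z (Y i))"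
    if i: "i < n" and z: "z \<in> outputs L (X i)" and J: "J \<in> JJ (X i)" and ne: "mixed J z (Y i) \<noteq> Y i" for i z J
  proof -
    let ?A = "{u \<bullet> phi (X i) (mixed J z (Y i)) | z J. z \<in> outputs L (X i) \<and> J \<in> JJ (X i) \<and> mixed J z (Y i) \<noteq> Y i}"
    have "finite ?A" by (rule fin_img2[OF fin_out finJJ[OF i]])
    moreover have "u \<bullet> phi (X i) (mixed J z (Y i)) \<in> ?A" using z J ne by blast
    ultimately have "u \<bullet> phi (X i) (mixed J z (Y i)) \<le> Max ?A" by (rule Max_ge)
    thus ?thesis unfolding mgJ_def margin_JJ_def dphi_def by (simp add: inner_diff_right)
  qed
  let ?RJS = "{norm (dphi phi (fst (D ! i)) (snd (D ! i)) (mixed J z (snd (D ! i)))) | i z J.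
       i < length D \<and> z \<in> outputs L (fst (D ! i)) \<and> J \<in> JJ (fst (D ! i))}"
  let ?RS = "{norm (dphi phi (fst (D ! i)) (snd (D ! i)) z) | i z.
       i < length D \<and> z \<in> outputs L (fst (D ! i))}"
  let ?Sig = "Sigma {..<n} (\<lambda>i. outputs L (X i) \<times> JJ (X i))"
  have finSig: "finite ?Sig"
    by (rule finite_SigmaI) (auto intro: finite_cartesian_product fin_out finJJ)
  have finRJS: "finite ?RJS"
    by (rule finite_subset[OF _ finite_imageI[OF finSig, of "\<lambda>(i,z,J). norm (dphi phi (X i) (Y i) (mixed J z (Y i)))"]])
      (auto simp: X_def Y_def n_def intro!: image_eqI[where x="(i, z, J)" for i z J])
  have finSig2: "finite (Sigma {..<n} (\<lambda>i. outputs L (X i)))"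
    by (rule finite_SigmaI) (auto intro: fin_out)
  have finRS: "finite ?RS"
    by (rule finite_subset[OF _ finite_imageI[OF finSig2, of "\<lambda>(i,z). norm (dphi phi (X i) (Y i) z)"]])
      (auto simp: X_def Y_def n_def intro!: image_eqI[where x="(i, z)" for i z])
  have normRJ: "norm (dphi phi (X i) (Y i) (mixed J z (Y i))) \<le> RJ"
    if i: "i < n" and z: "z \<in> outputs L (X i)" and J: "J \<in> JJ (X i)" for i z J
    unfolding RJ_def radius_JJ_def
    by (rule Max_ge[OF finRJS]) (use i z J in \<open>auto simp: X_def Y_def n_def\<close>)
  have RJS_ne: "?RJS \<noteq> {}"
  proof -
    obtain z :: "'v list" and J where "z \<in> outputs L (fst (D ! 0))" "J \<in> JJ (fst (D ! 0))"
    proof -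
      have "0 < length D" using D_ne by simp
      from JJ_nontriv[rule_format, OF this] show ?thesis using that by blast
    qed
    thus ?thesis using D_ne by blast
  qed
  have RJ_nn: "RJ \<ge> 0"
  proof -
    have "RJ \<in> ?RJS" unfolding RJ_def radius_JJ_def by (rule Max_in[OF finRJS RJS_ne])
    thus ?thesis by auto
  qed
  have RJ_le: "RJ \<le> R"
  proof -
    have "?RJS \<subseteq> ?RS"
    proof
      fix a assume "a \<in> ?RJS"
      then obtain i z J where a: "a = norm (dphi phi (fst (D ! i)) (snd (D ! i)) (mixed J z (snd (D ! i))))"
        and i: "i < length D" "z \<in> outputs L (fst (D ! i))" "J \<in> JJ (fst (D ! i))" by blast
      have "mixed J z (snd (D ! i)) \<in> outputs L (fst (D ! i))"
        using lenY[of i] i by (simp add: outputs_def X_def Y_def n_def)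
      thus "a \<in> ?RS" using a i by blast
    qed
    hence "Max ?RJS \<le> Max ?RS" by (rule Max_mono[OF _ RJS_ne finRS])
    thus ?thesis unfolding RJ_def R_def radius_JJ_def radius_def .
  qed
  have Dd_nn: "Dd \<ge> 0" unfolding Dd_def D_u_delta_def by (simp add: sum_nonneg)
  define M where "M m = {i. i < m \<and> ystar i \<noteq> Y i}" for m
  have finM: "finite (M m)" for m unfolding M_def by auto
  have w0: "w 0 = 0" using run unfolding swvp_first_pass_def by simp
  have inv: "m \<le> n \<longrightarrow> (norm (w m))\<^sup>2 \<le> real (card (M m)) * RJ\<^sup>2
      \<and> real (card (M m)) * (\<delta> + rd) - (\<Sum>i\<in>M m. eps i) \<le> u \<bullet> w m" for m
  proof (induction m)
    case 0
    have "M 0 = {}" unfolding M_def by simp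
    thus ?case using w0 by simp
  next
    case (Suc m)
    show ?case
    proof
      assume m: "Suc m \<le> n"
      hence mn: "m < n" by simp
      with Suc.IH have IH1: "(norm (w m))\<^sup>2 \<le> real (card (M m)) * RJ\<^sup>2"
        and IH2: "real (card (M m)) * (\<delta> + rd) - (\<Sum>i\<in>M m. eps i) \<le> u \<bullet> w m" by auto
      have st: "swvp_step phi L JJ (w m) (X m) (Y m) (ystar m) (g m) (w (Suc m))"
        using run mn unfolding swvp_first_pass_def n_def X_def Y_def by simp
      hence ys: "ystar m \<in> outputs L (X m)" unfolding swvp_step_def by simp
      show "(norm (w (Suc m)))\<^sup>2 \<le> real (card (M (Suc m))) * RJ\<^sup>2
        \<and> real (card (M (Suc m))) * (\<delta> + rd) - (\<Sum>i\<in>M (Suc m). eps i) \<le> u \<bullet> w (Suc m)"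
      proof (cases "ystar m = Y m")
        case True
        hence "M (Suc m) = M m" unfolding M_def using less_Suc_eq by auto
        moreover have "w (Suc m) = w m" using st True unfolding swvp_step_def by simp
        ultimately show ?thesis using IH1 IH2 by simp
      next
        case False
        hence MS: "M (Suc m) = insert m (M m)" and mnot: "m \<notin> M m"
          unfolding M_def using less_Suc_eq by auto
        define I where "I = {J \<in> JJ (X m). mixed J (ystar m) (Y m) \<noteq> Y m}"
        define d where "d J = dphi phi (X m) (Y m) (mixed J (ystar m) (Y m))" for J
        define v where "v = (\<Sum>J\<in>I. g m J *\<^sub>R d J)"
        have c: "(\<forall>J\<in>I. 0 \<le> g m J) \<and> (\<Sum>J\<in>I. g m J) = 1 \<and> w m \<bullet> v \<le> 0 \<and> w (Suc m) = w m + v"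
          using st False unfolding swvp_step_def I_def v_def d_def Let_def by simp
        hence g0: "\<And>J. J \<in> I \<Longrightarrow> 0 \<le> g m J" and g1: "(\<Sum>J\<in>I. g m J) = 1"
          and wv: "w m \<bullet> v \<le> 0" and wS: "w (Suc m) = w m + v" by auto
        have finI: "finite I" unfolding I_def using finJJ[OF mn] by simp
        have nv: "norm v \<le> RJ"
        proof -
          have "norm v \<le> (\<Sum>J\<in>I. norm (g m J *\<^sub>R d J))" unfolding v_def by (rule norm_sum)
          also have "\<dots> = (\<Sum>J\<in>I. g m J * norm (d J))" using g0 by (intro sum.cong) auto
          also have "\<dots> \<le> (\<Sum>J\<in>I. g m J * RJ)"
            by (intro sum_mono mult_left_mono) (use g0 normRJ[OF mn ys] in \<open>auto simp: d_def I_def\<close>)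
          also have "\<dots> = RJ" using g1 by (simp add: sum_distrib_right[symmetric])
          finally show ?thesis .
        qed
        have uv: "mgJ m \<le> u \<bullet> v"
        proof -
          have "u \<bullet> v = (\<Sum>J\<in>I. g m J * (u \<bullet> d J))" unfolding v_def by (simp add: inner_sum_right)
          also have "\<dots> \<ge> (\<Sum>J\<in>I. g m J * mgJ m)"
            by (intro sum_mono mult_left_mono) (use g0 udphi[OF mn ys] in \<open>auto simp: d_def I_def\<close>)
          moreover have "(\<Sum>J\<in>I. g m J * mgJ m) = mgJ m" using g1 by (simp add: sum_distrib_right[symmetric])
          ultimately show ?thesis by simp
        qed
        have "mgJ m \<ge> \<delta> + rd - eps m" using rd_le[OF mn] unfolding eps_def by simp
        hence uv2: "u \<bullet> v \<ge> \<delta> + rd - eps m" using uv by simp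
        have "(norm (w (Suc m)))\<^sup>2 = (norm (w m))\<^sup>2 + 2 * (w m \<bullet> v) + (norm v)\<^sup>2"
          unfolding wS using dot_norm[of "w m" v] by (simp add: field_simps)
        also have "\<dots> \<le> real (card (M m)) * RJ\<^sup>2 + RJ\<^sup>2"
          using IH1 wv power_mono[OF nv norm_ge_zero, of 2] by simp
        also have "\<dots> = real (card (M (Suc m))) * RJ\<^sup>2" using MS mnot finM by (simp add: algebra_simps)
        finally have A: "(norm (w (Suc m)))\<^sup>2 \<le> real (card (M (Suc m))) * RJ\<^sup>2" .
        have "real (card (M (Suc m))) * (\<delta> + rd) - (\<Sum>i\<in>M (Suc m). eps i)
              = (real (card (M m)) * (\<delta> + rd) - (\<Sum>i\<in>M m. eps i)) + (\<delta> + rd - eps m)"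
          using MS mnot finM by (simp add: algebra_simps)
        also have "\<dots> \<le> u \<bullet> w m + u \<bullet> v" using IH2 uv2 by simp
        also have "\<dots> = u \<bullet> w (Suc m)" unfolding wS by (simp add: inner_add_right)
        finally show ?thesis using A by simp
      qed
    qed
  qed
  define k where "k = card (M n)"
  define S where "S = (\<Sum>i\<in>M n. eps i)"
  have nk: "num_mistakes D ystar = k" unfolding num_mistakes_def k_def M_def n_def Y_def by simp
  from inv[of n] have I1: "(norm (w n))\<^sup>2 \<le> real k * RJ\<^sup>2" and I2: "real k * (\<delta> + rd) - S \<le> u \<bullet> w n"
    unfolding k_def S_def by auto
  have "norm (w n) \<le> sqrt k * RJ"
  proof -
    have "norm (w n) = sqrt ((norm (w n))\<^sup>2)" by simp
    also have "\<dots> \<le> sqrt (real k * RJ\<^sup>2)" using I1 real_sqrt_le_mono by blast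
    also have "\<dots> = sqrt k * RJ" using RJ_nn by (simp add: real_sqrt_mult)
    finally show ?thesis .
  qed
  moreover have "u \<bullet> w n \<le> norm (w n)" using norm_cauchy_schwarz[of u "w n"] nu by simp
  moreover have "S \<le> sqrt k * Dd"
  proof -
    have "S\<^sup>2 \<le> (\<Sum>i\<in>M n. (eps i)\<^sup>2) * k" unfolding S_def k_def by (rule sum_squared_le_sum_of_squares)
    also have "(\<Sum>i\<in>M n. (eps i)\<^sup>2) \<le> (\<Sum>i<n. (eps i)\<^sup>2)"
      by (rule sum_mono2) (auto simp: M_def)
    hence "(\<Sum>i\<in>M n. (eps i)\<^sup>2) * k \<le> (\<Sum>i<n. (eps i)\<^sup>2) * k" by (simp add: mult_right_mono)
    also have "(\<Sum>i<n. (eps i)\<^sup>2) = Dd\<^sup>2"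
      unfolding Dd_def D_u_delta_def eps_def mg_def X_def Y_def n_def
      by (simp add: sum_nonneg)
    finally have "S\<^sup>2 \<le> k * Dd\<^sup>2" by (simp add: mult.commute)
    hence "sqrt (S\<^sup>2) \<le> sqrt (k * Dd\<^sup>2)" using real_sqrt_le_mono by blast
    thus ?thesis using Dd_nn by (simp add: real_sqrt_mult)
  qed
  ultimately have key: "real k * (\<delta> + rd) \<le> sqrt k * (RJ + Dd)" using I2 by (simp add: algebra_simps)
  have Apos: "\<delta> + rd > 0" using dpos rd_nn by simp
  have bound: "real k \<le> (RJ + Dd)\<^sup>2 / (\<delta> + rd)\<^sup>2"
  proof (cases "k = 0")
    case True thus ?thesis by simp
  next
    case False
    hence sk: "sqrt k > 0" by simp
    have kk: "sqrt (real k) * sqrt (real k) = real k" by simp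
    have "sqrt k * (sqrt k * (\<delta> + rd)) \<le> sqrt k * (RJ + Dd)"
      using key unfolding mult.assoc[symmetric] kk .
    hence "sqrt k * (\<delta> + rd) \<le> RJ + Dd" using sk by (rule mult_left_le_imp_le)
    hence "(sqrt k * (\<delta> + rd))\<^sup>2 \<le> (RJ + Dd)\<^sup>2"
      using Apos sk by (intro power_mono) auto
    hence "real k * (\<delta> + rd)\<^sup>2 \<le> (RJ + Dd)\<^sup>2" by (simp add: power_mult_distrib)
    thus ?thesis using Apos by (simp add: pos_le_divide_eq)
  qed
  have cmp: "(RJ + Dd)\<^sup>2 / (\<delta> + rd)\<^sup>2 \<le> (R + Dd)\<^sup>2 / \<delta>\<^sup>2"
  proof (rule frac_le)
    show "0 \<le> (R + Dd)\<^sup>2" by simp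
    show "(RJ + Dd)\<^sup>2 \<le> (R + Dd)\<^sup>2" using RJ_nn Dd_nn RJ_le by (intro power_mono) auto
    show "0 < \<delta>\<^sup>2" using dpos by simp
    show "\<delta>\<^sup>2 \<le> (\<delta> + rd)\<^sup>2" using dpos rd_nn by (intro power_mono) auto
  qed
  show "r_diff phi L JJ D u \<ge> 0
         \<and> real (num_mistakes D ystar)
             \<le> (radius_JJ phi L JJ D + D_u_delta phi L D u \<delta>)\<^sup>2 / (\<delta> + r_diff phi L JJ D u)\<^sup>2
         \<and> (radius_JJ phi L JJ D + D_u_delta phi L D u \<delta>)\<^sup>2 / (\<delta> + r_diff phi L JJ D u)\<^sup>2
             \<le> (radius phi L D + D_u_delta phi L D u \<delta>)\<^sup>2 / \<delta>\<^sup>2"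
    using rd_nn bound cmp nk unfolding rd_def RJ_def R_def Dd_def by simp
qed

end
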